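(* Let $m,n,a$ be nonnegative integers with $1\le m\le n+1$ and $n\le a$. Then $$\sum_{k=0}^{m-1}\binom{m}{k}^{-1}\binom{a}{n-k}^{-1}=g(m)\sum_{i=0}^{m-1}\frac{C(i)}{g(i)\,(i+2)\,(a+i-n+2)},$$ where $$g(m)=\frac{(a+m-n+1)!\,(a+4)!\,(m+1)}{2\,(a+m+3)!\,(a-n+2)!}$$ (and $g(i)$ is the same expression with $m$ replaced by $i$), and $$C(i)=(n+i+in+1)\binom{a}{n}^{-1}+(2i+a-n+3)\binom{a}{n-i}^{-1}.$$ *)

theory Defs
  imports Complex_Main
begin

text \<open>g(m) = (a+m-n+1)! (a+4)! (m+1) / (2 (a+m+3)! (a-n+2)!); used with n \<le> a,
  so the natural-number subtractions do not truncate.\<close>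
definition g :: "nat \<Rightarrow> nat \<Rightarrow> nat \<Rightarrow> real" where
  "g a n m = (fact (a + m - n + 1) * fact (a + 4) * real (m + 1)) /
             (2 * fact (a + m + 3) * fact (a - n + 2))"

definition C :: "nat \<Rightarrow> nat \<Rightarrow> nat \<Rightarrow> real" where
  "C a n i = real (n + i + i * n + 1) / real (a choose n)
           + real (2 * i + a - n + 3) / real (a choose (n - i))"

end

theory Submission
  imports Defs
begin

lemma b1: "(m - k) * (m choose k) = Suc k * (m choose Suc k)"
  by (metis binomial_absorption binomial_absorb_comp)

lemma b3: "k \<le> m \<Longrightarrow> (Suc m - k) * (Suc m choose k) = Suc m * (m choose k)"
  by (simp add: binomial_absorb_comp)

definition tt :: "nat \<Rightarrow> nat \<Rightarrow> nat \<Rightarrow> nat \<Rightarrow> real" where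
  "tt a n m k = 1 / (real (m choose k) * real (a choose (n - k)))"

lemma term_step:
  assumes "k < m" "m \<le> n" "n \<le> a"
  shows "real (m - k) * real (n - k) * tt a n m (Suc k) = real (Suc k) * real (a - n + k + 1) * tt a n m k"
proof -
  have e1: "real (m - k) * real (m choose k) = real (Suc k) * real (m choose Suc k)"
    using b1[of m k] by (metis of_nat_mult)
  have s: "Suc (n - Suc k) = n - k" using assms by simp
  have e2n: "(a - (n - Suc k)) * (a choose (n - Suc k)) = (n - k) * (a choose (n - k))"
    using b1[of a "n - Suc k"] unfolding s .
  have e2: "real (a - (n - Suc k)) * real (a choose (n - Suc k)) = real (n - k) * real (a choose (n - k))"
    using e2n by (metis of_nat_mult)
  have s2: "a - (n - Suc k) = a - n + k + 1" using assms by simp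
  have p1: "real (m choose Suc k) > 0" "real (m choose k) > 0" using assms by auto
  have p2: "real (a choose (n - k)) > 0" "real (a choose (n - Suc k)) > 0" using assms by auto
  have key: "real (m - k) * real (n - k) * (real (m choose k) * real (a choose (n - k)))
     = real (Suc k) * real (a - n + k + 1) * (real (m choose Suc k) * real (a choose (n - Suc k)))"
  proof -
    have "real (m - k) * real (n - k) * (real (m choose k) * real (a choose (n - k)))
       = (real (m - k) * real (m choose k)) * (real (n - k) * real (a choose (n - k)))"
      by (simp only: mult_ac)
    also have "\<dots> = (real (Suc k) * real (m choose Suc k)) * (real (a - n + k + 1) * real (a choose (n - Suc k)))"
      using e1 e2 unfolding s2 by simp
    also have "\<dots> = real (Suc k) * real (a - n + k + 1) * (real (m choose Suc k) * real (a choose (n - Suc k)))"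
      by (simp only: mult_ac)
    finally show ?thesis .
  qed
  show ?thesis using key p1 p2 unfolding tt_def
    by (simp add: divide_simps)
qed


lemma telescope:
  assumes "m \<le> n" "n \<le> a"
  shows "(\<Sum>k<m. ((real a + m + 4) * (real m + 1 - k) - (real a + m - n + 2) * (real m + 2)) * tt a n m k)
     = (real m + 1) * (real n + 1) * tt a n m 0 - (real n + 1 - m) * tt a n m m"
proof -
  define G where "G k = (real m + 1 - real k) * (real n + 1 - real k) * tt a n m k" for k
  have step: "((real a + m + 4) * (real m + 1 - k) - (real a + m - n + 2) * (real m + 2)) * tt a n m k
      = G k - G (Suc k)" if "k < m" for k
  proof -
    have ts: "real (m - k) * real (n - k) * tt a n m (Suc k) = real (Suc k) * real (a - n + k + 1) * tt a n m k"
      using term_step[OF that assms] .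
    have c1: "real (m - k) = real m - k" "real (n - k) = real n - k" "real (a - n + k + 1) = real a - n + k + 1"
      using that assms by auto
    have "G (Suc k) = (real k + 1) * (real a - n + k + 1) * tt a n m k"
      using ts unfolding G_def c1 by (simp add: algebra_simps)
    then have "G k - G (Suc k) = ((real m + 1 - real k) * (real n + 1 - real k) - (real k + 1) * (real a - n + k + 1)) * tt a n m k"
      unfolding G_def by (simp add: algebra_simps)
    also have "\<dots> = ((real a + m + 4) * (real m + 1 - k) - (real a + m - n + 2) * (real m + 2)) * tt a n m k"
      by (simp add: algebra_simps)
    finally show ?thesis by simp
  qed
  have "(\<Sum>k<m. ((real a + m + 4) * (real m + 1 - k) - (real a + m - n + 2) * (real m + 2)) * tt a n m k)
      = (\<Sum>k<m. G k - G (Suc k))"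
    by (rule sum.cong[OF refl]) (rule step, simp)
  also have "\<dots> = G 0 - G m" by (rule sum_lessThan_telescope')
  also have "\<dots> = (real m + 1) * (real n + 1) * tt a n m 0 - (real n + 1 - m) * tt a n m m"
    unfolding G_def by simp
  finally show ?thesis .
qed

lemma Srec:
  assumes "m \<le> n" "n \<le> a"
  shows "(real a + m + 4) * (real m + 1) * (\<Sum>k<Suc m. tt a n (Suc m) k)
     = (real a + m - n + 2) * (real m + 2) * (\<Sum>k<m. tt a n m k) + C a n m"
proof -
  have tS: "tt a n (Suc m) k = (real m + 1 - k) / (real m + 1) * tt a n m k" if "k \<le> m" for k
  proof -
    have e: "real (Suc m - k) * real (Suc m choose k) = real (Suc m) * real (m choose k)"
      using b3[OF that] by (metis of_nat_mult)
    have c: "real (Suc m - k) = real m + 1 - k" using that by auto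
    have p: "real (Suc m choose k) > 0" "real (m choose k) > 0" "real (a choose (n - k)) > 0"
      using that assms by auto
    show ?thesis using e p unfolding tt_def c by (simp add: divide_simps)
  qed
  have tm: "tt a n (Suc m) m = 1 / (real m + 1) * tt a n m m"
    using tS[of m] by simp
  have "(real a + m + 4) * (real m + 1) * (\<Sum>k<Suc m. tt a n (Suc m) k)
      = (\<Sum>k<m. (real a + m + 4) * (real m + 1) * tt a n (Suc m) k) + (real a + m + 4) * (real m + 1) * tt a n (Suc m) m"
    by (simp add: sum_distrib_left[symmetric] distrib_left)
  also have "(\<Sum>k<m. (real a + m + 4) * (real m + 1) * tt a n (Suc m) k)
      = (\<Sum>k<m. (real a + m - n + 2) * (real m + 2) * tt a n m k
          + ((real a + m + 4) * (real m + 1 - k) - (real a + m - n + 2) * (real m + 2)) * tt a n m k)"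
  proof (rule sum.cong)
    fix k assume "k \<in> {..<m}"
    then have "k \<le> m" by simp
    show "(real a + m + 4) * (real m + 1) * tt a n (Suc m) k
      = (real a + m - n + 2) * (real m + 2) * tt a n m k
          + ((real a + m + 4) * (real m + 1 - k) - (real a + m - n + 2) * (real m + 2)) * tt a n m k"
    proof -
      have km: "k \<le> m" by fact
      have "(real m + 1) * tt a n (Suc m) k = (real m + 1 - k) * tt a n m k"
        using tS[OF km] by simp
      then have "(real a + m + 4) * (real m + 1) * tt a n (Suc m) k = (real a + m + 4) * ((real m + 1 - k) * tt a n m k)"
        by (metis mult.assoc)
      then show ?thesis by (simp add: algebra_simps)
    qed
  qed simp
  also have "\<dots> = (real a + m - n + 2) * (real m + 2) * (\<Sum>k<m. tt a n m k)
     + ((real m + 1) * (real n + 1) * tt a n m 0 - (real n + 1 - m) * tt a n m m)"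
    by (simp add: sum.distrib sum_distrib_left telescope[OF assms])
  finally have "(real a + m + 4) * (real m + 1) * (\<Sum>k<Suc m. tt a n (Suc m) k)
     = (real a + m - n + 2) * (real m + 2) * (\<Sum>k<m. tt a n m k)
     + ((real m + 1) * (real n + 1) * tt a n m 0 - (real n + 1 - m) * tt a n m m)
     + (real a + m + 4) * tt a n m m"
    using tm by simp
  also have "\<dots> = (real a + m - n + 2) * (real m + 2) * (\<Sum>k<m. tt a n m k) + C a n m"
  proof -
    have c: "real (n + m + m * n + 1) = (real m + 1) * (real n + 1)"
      "real (2 * m + a - n + 3) = 2 * real m + real a - real n + 3"
      using assms by (auto simp: algebra_simps)
    have "C a n m = (real m + 1) * (real n + 1) * tt a n m 0 + (2 * real m + real a - real n + 3) * tt a n m m"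
      unfolding C_def tt_def c by simp
    then show ?thesis by (simp add: algebra_simps)
  qed
  finally show ?thesis .
qed


lemma alg_aux:
  fixes X1 X2 X3 X4 u v w z :: real
  assumes "X2 > 0" "X3 > 0" "u > 0" "v > 0"
  shows "(w * X1) * X4 * z / (2 * (u * X3) * X2) = X1 * X4 * v / (2 * X3 * X2) * (w * z / (u * v))"
  using assms by (simp add: field_simps)

lemma gpos: "n \<le> a \<Longrightarrow> g a n m > 0"
  unfolding g_def by (intro divide_pos_pos mult_pos_pos) auto

lemma gSuc:
  assumes "n \<le> a"
  shows "g a n (Suc m) = g a n m * ((real a + m - n + 2) * (real m + 2) / ((real a + m + 4) * (real m + 1)))"
proof -
  define X1 where "X1 = (fact (a + m - n + 1) :: real)"
  define X2 where "X2 = (fact (a - n + 2) :: real)"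
  define X3 where "X3 = (fact (a + m + 3) :: real)"
  define X4 where "X4 = (fact (a + 4) :: real)"
  have e1: "a + Suc m - n + 1 = Suc (a + m - n + 1)" using assms by simp
  have e2: "a + Suc m + 3 = Suc (a + m + 3)" by simp
  have c1: "real (Suc (a + m - n + 1)) = real a + m - n + 2" using assms by simp
  have c2: "real (Suc (a + m + 3)) = real a + m + 4" by simp
  have c3: "real (Suc m + 1) = real m + 2" "real (m + 1) = real m + 1" by simp_all
  have A: "g a n (Suc m) = ((real a + m - n + 2) * X1) * X4 * (real m + 2) / (2 * ((real a + m + 4) * X3) * X2)"
    unfolding g_def e1 e2 fact_Suc of_nat_mult c1 c2 c3 X1_def X2_def X3_def X4_def by (rule refl)
  have B: "g a n m = X1 * X4 * (real m + 1) / (2 * X3 * X2)"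
    unfolding g_def c3 X1_def X2_def X3_def X4_def by (rule refl)
  have p: "X1 > 0" "X2 > 0" "X3 > 0" "X4 > 0"
    unfolding X1_def X2_def X3_def X4_def by auto
  have q: "real a + m + 4 > 0" "real m + 1 > 0" by auto
  show ?thesis unfolding A B using alg_aux[OF p(2) p(3) q(1) q(2)] by simp
qed

theorem theorem3:
  fixes m n a :: nat
  assumes "1 \<le> m" and "m \<le> n + 1" and "n \<le> a"
  shows "(\<Sum>k=0..m-1. 1 / (real (m choose k) * real (a choose (n - k))))
         = g a n m * (\<Sum>i=0..m-1. C a n i / (g a n i * real (i + 2) * real (a + i - n + 2)))"
proof -
  define c where "c i = C a n i / (g a n i * real (i + 2) * real (a + i - n + 2))" for i
  have main: "m' \<le> n + 1 \<Longrightarrow> (\<Sum>k<m'. tt a n m' k) = g a n m' * (\<Sum>i<m'. c i)" for m'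
  proof (induction m')
    case 0
    then show ?case by simp
  next
    case (Suc m)
    then have mn: "m \<le> n" by simp
    have IH: "(\<Sum>k<m. tt a n m k) = g a n m * (\<Sum>i<m. c i)" using Suc mn by simp
    have R: "(real a + m + 4) * (real m + 1) * (\<Sum>k<Suc m. tt a n (Suc m) k)
     = (real a + m - n + 2) * (real m + 2) * (\<Sum>k<m. tt a n m k) + C a n m"
      using Srec[OF mn assms(3)] .
    have gp: "g a n m > 0" using gpos assms(3) by blast
    have c1: "real (m + 2) = real m + 2" "real (a + m - n + 2) = real a + m - n + 2"
      using mn assms(3) by auto
    have pos1: "real a + m - n + 2 > 0" "(real a + m + 4) * (real m + 1) > 0"
      using mn assms(3) by auto
    have d: "g a n m * (real m + 2) * (real a + m - n + 2) \<noteq> 0" using gp pos1 by simp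
    have c': "c m = C a n m / (g a n m * (real m + 2) * (real a + m - n + 2))"
      unfolding c_def c1 by (rule refl)
    have "g a n m * (real a + m - n + 2) * (real m + 2) * c m
       = (g a n m * (real m + 2) * (real a + m - n + 2)) * (C a n m / (g a n m * (real m + 2) * (real a + m - n + 2)))"
      unfolding c' by (simp only: mult_ac)
    also have "\<dots> = C a n m" using d by simp
    finally have cm: "g a n m * (real a + m - n + 2) * (real m + 2) * c m = C a n m" .
    have "(real a + m + 4) * (real m + 1) * (g a n (Suc m) * (\<Sum>i<Suc m. c i))
        = g a n m * (real a + m - n + 2) * (real m + 2) * ((\<Sum>i<m. c i) + c m)"
      unfolding gSuc[OF assms(3)] using pos1 by (simp add: field_simps)
    also have "\<dots> = (real a + m - n + 2) * (real m + 2) * (g a n m * (\<Sum>i<m. c i))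
        + g a n m * (real a + m - n + 2) * (real m + 2) * c m"
      by (simp add: algebra_simps)
    also have "\<dots> = (real a + m + 4) * (real m + 1) * (\<Sum>k<Suc m. tt a n (Suc m) k)"
      unfolding R IH[symmetric] cm ..
    finally show ?case using pos1 by simp
  qed
  have I: "{0..m-1} = {..<m}" using assms(1) by auto
  show ?thesis unfolding I using main[OF assms(2)] unfolding tt_def c_def by simp
qed

end
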